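(* Let $d\in\mathbb{N}_+$, $T>0$, and let $f\colon\mathbb{R}^d\times[0,T]\to\mathbb{R}^d$ be continuous in $t$ and such that there exists $L>0$ with $\|f(x,t)-f(y,t)\|\le L\|x-y\|$ for all $x,y\in\mathbb{R}^d$ and all $t\in[0,T]$. For $z_0\in\mathbb{R}^d$ let $\mathbf{z}_{z_0}\colon[0,T]\to\mathbb{R}^d$ be the solution of $\dot{\mathbf{z}}=f(\mathbf{z},t)$, $\mathbf{z}(0)=z_0$. Then for any compact set $K\subseteq\mathbb{R}^d$ and any $\varepsilon>0$ there exists a constant $P_{\varepsilon,T,K,f}$ such that for every integer $P\ge P_{\varepsilon,T,K,f}$ there exist parameters $(W_i,A_i^1,A_i^2,B_i)\in\mathbb{R}^d\times\mathbb{R}^{d\times d}\times\mathbb{R}^d\times\mathbb{R}^d$, $i=1,\dots,P$, such that $$\|\mathbf{z}_{z_0}(\cdot)-\mathbf{x}_{z_0}(\cdot)\|_{L^\infty([0,T];\mathbb{R}^d)}\le\varepsilon\quad\text{for all } z_0\in K,$$ where $\mathbf{x}_{z_0}\colon[0,T]\to\mathbb{R}^d$ is the solution of the semi-autonomous neural ODE $$\dot{\mathbf{x}}=\sum_{i=1}^P W_i\circ\boldsymbol{\sigma}(A_i^1\mathbf{x}+A_i^2 t+B_i),\qquad \mathbf{x}(0)=z_0.$$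
   Context: $\|\cdot\|$ is the Euclidean norm. $\circ$ denotes the Hadamard (componentwise) product of vectors. $\sigma(s)=\max\{s,0\}$ is the ReLU function and $\boldsymbol{\sigma}\colon\mathbb{R}^d\to\mathbb{R}^d$ applies $\sigma$ componentwise. The right-hand side of the neural ODE is globally Lipschitz in $\mathbf{x}$, so its solution exists and is unique on $[0,T]$. *)

theory Defs
  imports "HOL-Analysis.Analysis"
begin

definition relu :: "real \<Rightarrow> real" where
  "relu s = max s 0"

definition relu_vec :: "real ^ 'n \<Rightarrow> real ^ 'n" where
  "relu_vec v = (\<chi> j. relu (v $ j))"

definition hadamard :: "real ^ 'n \<Rightarrow> real ^ 'n \<Rightarrow> real ^ 'n" where
  "hadamard v w = (\<chi> j. v $ j * w $ j)"

definition is_solution ::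
  "(real ^ 'n \<Rightarrow> real \<Rightarrow> real ^ 'n) \<Rightarrow> real \<Rightarrow> real ^ 'n \<Rightarrow> (real \<Rightarrow> real ^ 'n) \<Rightarrow> bool" where
  "is_solution g T x0 x \<longleftrightarrow>
     x 0 = x0 \<and>
     (\<forall>t\<in>{0..T}. (x has_vector_derivative g (x t) t) (at t within {0..T}))"

definition neural_rhs ::
  "nat \<Rightarrow> (nat \<Rightarrow> real ^ 'n) \<Rightarrow> (nat \<Rightarrow> real ^ 'n ^ 'n) \<Rightarrow> (nat \<Rightarrow> real ^ 'n)
     \<Rightarrow> (nat \<Rightarrow> real ^ 'n) \<Rightarrow> real ^ 'n \<Rightarrow> real \<Rightarrow> real ^ 'n" where
  "neural_rhs P W A1 A2 B x t =
     (\<Sum>i\<in>{1..P}. hadamard (W i) (relu_vec (A1 i *v x + t *\<^sub>R A2 i + B i)))"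

end

theory Submission
  imports Defs
begin


inductive_set UNET :: "(real \<Rightarrow> real) set" where
  U0: "(\<lambda>s. 0) \<in> UNET"
| U1: "(\<lambda>s. w * relu (l * s + c)) \<in> UNET"
| Uadd: "g \<in> UNET \<Longrightarrow> h \<in> UNET \<Longrightarrow> (\<lambda>s. g s + h s) \<in> UNET"

lemma Uscale: "g \<in> UNET \<Longrightarrow> (\<lambda>s. k * g s) \<in> UNET"
proof (induction rule: UNET.induct)
  case U0 then show ?case using UNET.U0 by simp
next
  case (U1 w l c) then show ?case using UNET.U1[of "k*w" l c] by (simp add: mult.assoc)
next
  case (Uadd g h) then show ?case using UNET.Uadd[of "\<lambda>s. k * g s" "\<lambda>s. k * h s"] by (simp add: distrib_left)
qed

lemma Usum: "finite A \<Longrightarrow> (\<And>i. i \<in> A \<Longrightarrow> g i \<in> UNET) \<Longrightarrow> (\<lambda>s. \<Sum>i\<in>A. g i s) \<in> UNET"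
proof (induction A rule: finite_induct)
  case empty then show ?case using UNET.U0 by simp
next
  case (insert x F) then show ?case using UNET.Uadd[of "g x" "\<lambda>s. \<Sum>i\<in>F. g i s"] by simp
qed

lemma Uconst: "(\<lambda>s. k) \<in> UNET"
  using UNET.U1[of k 0 1] by (simp add: relu_def)

definition clamp :: "real \<Rightarrow> real" where "clamp x = relu x - relu (x - 1)"

lemma clamp_U: "(\<lambda>s. k * clamp (a * s + b)) \<in> UNET"
proof -
  have "(\<lambda>s. k * relu (a * s + b) + (- k) * relu (a * s + (b - 1))) \<in> UNET"
    by (intro UNET.Uadd UNET.U1)
  then show ?thesis by (simp add: clamp_def algebra_simps)
qed

lemma clamp_ge1: "x \<ge> 1 \<Longrightarrow> clamp x = 1" by (simp add: clamp_def relu_def)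
lemma clamp_le0: "x \<le> 0 \<Longrightarrow> clamp x = 0" by (simp add: clamp_def relu_def)
lemma clamp_mid: "0 \<le> x \<Longrightarrow> x \<le> 1 \<Longrightarrow> clamp x = x" by (simp add: clamp_def relu_def)

lemma unet_approx:
  assumes hc: "continuous_on {lo..hi} h" and lh: "lo < hi" and e: "e > 0"
  shows "\<exists>g\<in>UNET. \<forall>s\<in>{lo..hi}. \<bar>h s - g s\<bar> \<le> e"
proof -
  have "uniformly_continuous_on {lo..hi} h"
    using compact_uniformly_continuous[OF hc] by simp
  then obtain d where d: "d > 0" and dh: "\<And>x y. x \<in> {lo..hi} \<Longrightarrow> y \<in> {lo..hi} \<Longrightarrow> dist y x < d \<Longrightarrow> dist (h y) (h x) < e"
    unfolding uniformly_continuous_on_def using e by metis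
  obtain n :: nat where n: "(hi - lo) / d < n" using reals_Archimedean2 by blast
  have npos: "n > 0" using n lh d by (metis divide_pos_pos gr0I less_eq_real_def not_less of_nat_0 diff_gt_0_iff_gt)
  define D where "D = (hi - lo) / n"
  have Dpos: "D > 0" using lh npos by (simp add: D_def)
  have Dd: "D < d" using n d npos lh unfolding D_def by (simp add: field_simps)
  define p where "p k = lo + real k * D" for k :: nat
  have pn: "p n = hi" using npos by (simp add: p_def D_def)
  have pin: "p k \<in> {lo..hi}" if "k \<le> n" for k
  proof -
    have "real k * D \<le> real n * D" using that Dpos by (simp add: mult_right_mono)
    moreover have "real k * D \<ge> 0" using Dpos by simp
    ultimately show ?thesis using pn by (simp add: p_def)
  qed
  define g where "g s = h lo + (\<Sum>k<n. (h (p (Suc k)) - h (p k)) * clamp (s / D - p k / D))" for s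
  have gU: "g \<in> UNET"
  proof -
    have "(\<lambda>s. h lo + (\<Sum>k<n. (h (p (Suc k)) - h (p k)) * clamp ((1/D) * s + (- p k / D)))) \<in> UNET"
      by (intro UNET.Uadd Uconst Usum clamp_U) auto
    then show ?thesis unfolding g_def by simp
  qed
  have "\<bar>h s - g s\<bar> \<le> e" if s: "s \<in> {lo..hi}" for s
  proof -
    obtain m where m: "m < n" "p m \<le> s" "s \<le> p (Suc m)"
    proof (cases "s < hi")
      case True
      define m where "m = nat \<lfloor>(s - lo) / D\<rfloor>"
      have q0: "(s - lo) / D \<ge> 0" using s Dpos by simp
      have mf: "real m \<le> (s - lo) / D" "(s - lo) / D < real m + 1"
        using q0 by (simp_all add: m_def)
      have "(s - lo) / D < n" using True Dpos npos by (simp add: D_def field_simps)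
      then have "m < n" using mf by linarith
      moreover have "p m \<le> s" using mf(1) Dpos by (simp add: p_def field_simps)
      moreover have "s \<le> p (Suc m)" using mf(2) Dpos by (simp add: p_def field_simps)
      ultimately show ?thesis using that by blast
    next
      case False
      then have "s = hi" using s by simp
      moreover have "p (n - 1) \<le> hi" using pin[of "n-1"] by simp
      ultimately show ?thesis using that[of "n-1"] npos pn by simp
    qed
    define th where "th = s / D - p m / D"
    have th01: "0 \<le> th" "th \<le> 1" using m Dpos by (simp_all add: th_def p_def field_simps)
    have sumeq: "(\<Sum>k<n. (h (p (Suc k)) - h (p k)) * clamp (s / D - p k / D))
        = (\<Sum>k<m. (h (p (Suc k)) - h (p k))) + (h (p (Suc m)) - h (p m)) * th"
    proof -
      have split: "{..<n} = {..<m} \<union> {m} \<union> {Suc m..<n}" using m(1) by auto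
      have A: "(\<Sum>k<m. (h (p (Suc k)) - h (p k)) * clamp (s / D - p k / D)) = (\<Sum>k<m. (h (p (Suc k)) - h (p k)))"
      proof (rule sum.cong[OF refl])
        fix k assume "k \<in> {..<m}"
        then have "real (Suc k) \<le> real m" by simp
        then have "p (Suc k) \<le> p m" using Dpos by (simp add: p_def mult_right_mono)
        then have "s / D - p k / D \<ge> 1" using m(2) Dpos by (simp add: p_def field_simps)
        then show "(h (p (Suc k)) - h (p k)) * clamp (s / D - p k / D) = h (p (Suc k)) - h (p k)"
          by (simp add: clamp_ge1)
      qed
      have B: "(\<Sum>k\<in>{Suc m..<n}. (h (p (Suc k)) - h (p k)) * clamp (s / D - p k / D)) = 0"
      proof (rule sum.neutral, intro ballI)
        fix k assume "k \<in> {Suc m..<n}"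
        then have "real (Suc m) \<le> real k" by simp
        then have "p (Suc m) \<le> p k" using Dpos by (simp add: p_def mult_right_mono del: of_nat_Suc)
        then have "s / D - p k / D \<le> 0" using m(3) Dpos by (simp add: field_simps)
        then show "(h (p (Suc k)) - h (p k)) * clamp (s / D - p k / D) = 0"
          by (simp add: clamp_le0)
      qed
      have C: "clamp (s / D - p m / D) = th" using clamp_mid[OF th01] by (simp add: th_def)
      have "(\<Sum>k<n. (h (p (Suc k)) - h (p k)) * clamp (s / D - p k / D))
          = (\<Sum>k<m. (h (p (Suc k)) - h (p k)) * clamp (s / D - p k / D))
            + (h (p (Suc m)) - h (p m)) * clamp (s / D - p m / D)
            + (\<Sum>k\<in>{Suc m..<n}. (h (p (Suc k)) - h (p k)) * clamp (s / D - p k / D))"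
        unfolding split by (subst sum.union_disjoint; auto)+
      then show ?thesis using A B C by simp
    qed
    have tele: "(\<Sum>k<m. (h (p (Suc k)) - h (p k))) = h (p m) - h (p 0)"
      by (rule sum_lessThan_telescope)
    have gs: "g s = h (p m) + th * (h (p (Suc m)) - h (p m))"
      unfolding g_def sumeq tele by (simp add: p_def)
    have pm: "p m \<in> {lo..hi}" "p (Suc m) \<in> {lo..hi}" using pin m(1) by auto
    have d1: "\<bar>h s - h (p m)\<bar> < e"
      using dh[OF pm(1) s] m Dd by (simp add: dist_real_def p_def field_simps)
    have d2: "\<bar>h s - h (p (Suc m))\<bar> < e"
      using dh[OF pm(2) s] m Dd by (simp add: dist_real_def p_def field_simps)
    have "h s - g s = (1 - th) * (h s - h (p m)) + th * (h s - h (p (Suc m)))"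
      unfolding gs by (simp add: algebra_simps)
    also have "\<bar>\<dots>\<bar> \<le> \<bar>(1 - th) * (h s - h (p m))\<bar> + \<bar>th * (h s - h (p (Suc m)))\<bar>"
      by (rule abs_triangle_ineq)
    also have "\<dots> = (1 - th) * \<bar>h s - h (p m)\<bar> + th * \<bar>h s - h (p (Suc m))\<bar>"
      using th01 by (simp add: abs_mult)
    also have "\<dots> \<le> (1 - th) * e + th * e"
      using th01 d1 d2 by (intro add_mono mult_left_mono) auto
    finally show ?thesis by (simp add: algebra_simps)
  qed
  then show ?thesis using gU by blast
qed


inductive_set NET :: "((real ^ 'n) \<times> real \<Rightarrow> real) set" where
  N0: "(\<lambda>p. 0) \<in> NET"
| N1: "(\<lambda>p. w * relu (a \<bullet> fst p + b * snd p + c)) \<in> NET"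
| Nadd: "g \<in> NET \<Longrightarrow> h \<in> NET \<Longrightarrow> (\<lambda>p. g p + h p) \<in> NET"

lemma UNET_NET: "g \<in> UNET \<Longrightarrow> (\<lambda>p. g (a \<bullet> fst p + b * snd p)) \<in> NET"
proof (induction rule: UNET.induct)
  case U0 then show ?case using NET.N0 by simp
next
  case (U1 w l c)
  have "(\<lambda>p. w * relu ((l *\<^sub>R a) \<bullet> fst p + (l * b) * snd p + c)) \<in> NET" by (rule NET.N1)
  then show ?case by (simp add: algebra_simps)
next
  case (Uadd g h) then show ?case using NET.Nadd by fastforce
qed

lemma NET_repr: "h \<in> NET \<Longrightarrow> \<exists>(N::nat) w a b c. \<forall>p. h p = (\<Sum>i\<in>{1..N}. w i * relu (a i \<bullet> fst p + b i * snd p + c i))"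
proof (induction rule: NET.induct)
  case N0 then show ?case by (rule exI[of _ "0::nat"]) simp
next
  case (N1 w a b c) then show ?case
    by (rule_tac x=1 in exI, rule_tac x="\<lambda>_. w" in exI, rule_tac x="\<lambda>_. a" in exI,
        rule_tac x="\<lambda>_. b" in exI, rule_tac x="\<lambda>_. c" in exI) simp
next
  case (Nadd g h)
  from Nadd.IH(1) obtain N1 :: nat and w1 a1 b1 c1 where
    g: "\<forall>p. g p = (\<Sum>i\<in>{1..N1}. w1 i * relu (a1 i \<bullet> fst p + b1 i * snd p + c1 i))"
    by blast
  from Nadd.IH(2) obtain N2 :: nat and w2 a2 b2 c2 where
    h: "\<forall>p. h p = (\<Sum>i\<in>{1..N2}. w2 i * relu (a2 i \<bullet> fst p + b2 i * snd p + c2 i))"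
    by blast
  define w where "w i = (if i \<le> N1 then w1 i else w2 (i - N1))" for i
  define a where "a i = (if i \<le> N1 then a1 i else a2 (i - N1))" for i
  define b where "b i = (if i \<le> N1 then b1 i else b2 (i - N1))" for i
  define c where "c i = (if i \<le> N1 then c1 i else c2 (i - N1))" for i
  define F where "F p i = w i * relu (a i \<bullet> fst p + b i * snd p + c i)" for p i
  have "g p + h p = (\<Sum>i\<in>{1..N1+N2}. F p i)" for p
  proof -
    have "(\<Sum>i\<in>{1..N1+N2}. F p i) = (\<Sum>i\<in>{1..N1}. F p i) + (\<Sum>i\<in>{N1+1..N1+N2}. F p i)"
      by (rule sum.ub_add_nat) simp
    also have "(\<Sum>i\<in>{1..N1}. F p i) = g p"
      unfolding g[rule_format] by (rule sum.cong) (auto simp: F_def w_def a_def b_def c_def)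
    also have "(\<Sum>i\<in>{N1+1..N1+N2}. F p i) = (\<Sum>i\<in>{1+N1..N2+N1}. F p i)" by (simp add: add.commute)
    also have "\<dots> = (\<Sum>i\<in>{1..N2}. F p (i + N1))" by (rule sum.shift_bounds_cl_nat_ivl)
    also have "\<dots> = h p"
      unfolding h[rule_format] by (rule sum.cong) (auto simp: F_def w_def a_def b_def c_def)
    finally show ?thesis by simp
  qed
  then show ?case unfolding F_def by blast
qed

definition napprox :: "((real ^ 'n) \<times> real) set \<Rightarrow> ((real ^ 'n) \<times> real \<Rightarrow> real) \<Rightarrow> bool" where
  "napprox D h \<longleftrightarrow> (\<forall>e>0. \<exists>g\<in>NET. \<forall>p\<in>D. \<bar>h p - g p\<bar> < e)"

lemma approx_add: assumes "napprox D g" "napprox D h" shows "napprox D (\<lambda>p. g p + h p)"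
  unfolding napprox_def
proof (intro allI impI)
  fix e :: real assume e: "e > 0"
  obtain g1 where g1: "g1 \<in> NET" "\<forall>p\<in>D. \<bar>g p - g1 p\<bar> < e/2" using assms(1) e unfolding napprox_def by (meson half_gt_zero)
  obtain h1 where h1: "h1 \<in> NET" "\<forall>p\<in>D. \<bar>h p - h1 p\<bar> < e/2" using assms(2) e unfolding napprox_def by (meson half_gt_zero)
  have "(\<lambda>p. g1 p + h1 p) \<in> NET" using g1 h1 by (intro NET.Nadd)
  moreover have "\<forall>p\<in>D. \<bar>g p + h p - (g1 p + h1 p)\<bar> < e"
  proof
    fix p assume "p \<in> D"
    then have "\<bar>g p - g1 p\<bar> < e/2" "\<bar>h p - h1 p\<bar> < e/2" using g1(2) h1(2) by auto
    then show "\<bar>g p + h p - (g1 p + h1 p)\<bar> < e" by arith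
  qed
  ultimately show "\<exists>q\<in>NET. \<forall>p\<in>D. \<bar>g p + h p - q p\<bar> < e"
    by (intro bexI[of _ "\<lambda>p. g1 p + h1 p"]) simp_all
qed

lemma approx_exp:
  fixes a :: "real ^ 'n"
  assumes D: "compact D"
  shows "napprox D (\<lambda>p. k * exp (a \<bullet> fst p + b * snd p))"
  unfolding napprox_def
proof (intro allI impI)
  fix e :: real assume e: "e > 0"
  define u where "u p = a \<bullet> fst p + b * snd p" for p :: "(real ^ 'n) \<times> real"
  have "continuous_on D u" unfolding u_def by (intro continuous_intros)
  then have "compact (u ` D)" using D by (rule compact_continuous_image)
  then obtain M0 where M0: "\<forall>y\<in>u ` D. norm y \<le> M0" using compact_imp_bounded bounded_iff by metis
  define M where "M = max M0 0"
  have M: "\<forall>y\<in>u ` D. norm y \<le> M" using M0 unfolding M_def by force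
  have lh: "-M-1 < M+1" unfolding M_def by simp
  have "continuous_on {-M-1..M+1} (\<lambda>s. k * exp s)" by (intro continuous_intros)
  then obtain g where g: "g \<in> UNET" "\<forall>s\<in>{-M-1..M+1}. \<bar>k * exp s - g s\<bar> \<le> e/2"
    using unet_approx[OF _ lh, of "\<lambda>s. k * exp s" "e/2"] e by auto
  have "(\<lambda>p. g (a \<bullet> fst p + b * snd p)) \<in> NET" by (rule UNET_NET[OF g(1)])
  moreover have "\<forall>p\<in>D. \<bar>k * exp (a \<bullet> fst p + b * snd p) - g (a \<bullet> fst p + b * snd p)\<bar> < e"
  proof
    fix p assume "p \<in> D"
    then have "\<bar>u p\<bar> \<le> M" using M by auto
    then have "u p \<in> {-M-1..M+1}" by auto
    then have "\<bar>k * exp (u p) - g (u p)\<bar> \<le> e/2" using g(2) by blast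
    then show "\<bar>k * exp (a \<bullet> fst p + b * snd p) - g (a \<bullet> fst p + b * snd p)\<bar> < e"
      using e unfolding u_def by linarith
  qed
  ultimately show "\<exists>g\<in>NET. \<forall>p\<in>D. \<bar>k * exp (a \<bullet> fst p + b * snd p) - g p\<bar> < e"
    by (intro bexI[of _ "\<lambda>p. g (a \<bullet> fst p + b * snd p)"]) simp_all
qed

inductive_set ESPAN :: "((real ^ 'n) \<times> real \<Rightarrow> real) set" where
  E1: "(\<lambda>p. k * exp (a \<bullet> fst p + b * snd p)) \<in> ESPAN"
| Eadd: "g \<in> ESPAN \<Longrightarrow> h \<in> ESPAN \<Longrightarrow> (\<lambda>p. g p + h p) \<in> ESPAN"

lemma ESPAN_approx: assumes D: "compact D" and g: "g \<in> ESPAN" shows "napprox D g"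
  using g by induction (auto intro: approx_exp[OF D] approx_add)

lemma ESPAN_cont: "g \<in> ESPAN \<Longrightarrow> continuous_on D g"
  by (induction rule: ESPAN.induct) (auto intro!: continuous_intros)

lemma ESPAN_mult1: "g \<in> ESPAN \<Longrightarrow> (\<lambda>p. k * exp (a \<bullet> fst p + b * snd p) * g p) \<in> ESPAN"
proof (induction rule: ESPAN.induct)
  case (E1 k' a' b')
  have "(\<lambda>p. (k * k') * exp ((a + a') \<bullet> fst p + (b + b') * snd p)) \<in> ESPAN" by (rule ESPAN.E1)
  then show ?case by (simp add: algebra_simps exp_add inner_add_left)
next
  case (Eadd g h) then show ?case using ESPAN.Eadd by (fastforce simp: distrib_left)
qed

lemma ESPAN_mult: "g \<in> ESPAN \<Longrightarrow> h \<in> ESPAN \<Longrightarrow> (\<lambda>p. g p * h p) \<in> ESPAN"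
proof (induction rule: ESPAN.induct)
  case (E1 k a b) then show ?case using ESPAN_mult1 by blast
next
  case (Eadd g1 g2) then show ?case using ESPAN.Eadd by (fastforce simp: distrib_right)
qed

lemma ESPAN_const: "(\<lambda>p. c) \<in> ESPAN"
  using ESPAN.E1[of c 0 0] by simp

lemma cont_approx:
  assumes D: "compact D" and f: "continuous_on D f"
  shows "napprox D f"
  unfolding napprox_def
proof (intro allI impI)
  fix e :: real assume e: "e > 0"
  have "\<exists>g. g \<in> ESPAN \<and> (\<forall>x\<in>D. \<bar>f x - g x\<bar> < e/2)"
  proof (rule Stone_Weierstrass_HOL[OF D, where P="\<lambda>g. g \<in> ESPAN"])
    show "\<And>c. (\<lambda>x. c) \<in> ESPAN" by (rule ESPAN_const)
    show "\<And>g. g \<in> ESPAN \<Longrightarrow> continuous_on D g" by (rule ESPAN_cont)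
    show "\<And>g h. g \<in> ESPAN \<and> h \<in> ESPAN \<Longrightarrow> (\<lambda>x. g x + h x) \<in> ESPAN" by (auto intro: ESPAN.Eadd)
    show "\<And>g h. g \<in> ESPAN \<and> h \<in> ESPAN \<Longrightarrow> (\<lambda>x. g x * h x) \<in> ESPAN" by (auto intro: ESPAN_mult)
    show "\<exists>g. g \<in> ESPAN \<and> g x \<noteq> g y" if "x \<in> D \<and> y \<in> D \<and> x \<noteq> y" for x y
    proof (cases "fst x = fst y")
      case True
      then have "snd x \<noteq> snd y" using that prod_eq_iff by blast
      then have "exp (0 \<bullet> fst x + 1 * snd x) \<noteq> exp (0 \<bullet> fst y + 1 * snd y)" by simp
      then show ?thesis by (intro exI[of _ "\<lambda>p. 1 * exp (0 \<bullet> fst p + 1 * snd p)"] conjI ESPAN.E1) simp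
    next
      case False
      define a where "a = fst x - fst y"
      have "a \<bullet> fst x - a \<bullet> fst y = a \<bullet> a" by (simp add: a_def inner_diff)
      moreover have "a \<bullet> a > 0" using False by (simp add: a_def)
      ultimately have "exp (a \<bullet> fst x + 0 * snd x) \<noteq> exp (a \<bullet> fst y + 0 * snd y)" by auto
      then show ?thesis by (intro exI[of _ "\<lambda>p. 1 * exp (a \<bullet> fst p + 0 * snd p)"] conjI ESPAN.E1) simp
    qed
  qed (use f e in auto)
  then obtain g where g: "g \<in> ESPAN" "\<forall>x\<in>D. \<bar>f x - g x\<bar> < e/2" by blast
  obtain h where h: "h \<in> NET" "\<forall>x\<in>D. \<bar>g x - h x\<bar> < e/2"
    using ESPAN_approx[OF D g(1)] e unfolding napprox_def by (meson half_gt_zero)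
  have "\<forall>x\<in>D. \<bar>f x - h x\<bar> < e"
  proof
    fix x assume "x \<in> D"
    then have "\<bar>f x - g x\<bar> < e/2" "\<bar>g x - h x\<bar> < e/2" using g(2) h(2) by auto
    then show "\<bar>f x - h x\<bar> < e" by arith
  qed
  then show "\<exists>g\<in>NET. \<forall>p\<in>D. \<bar>f p - g p\<bar> < e" using h(1) by blast
qed



lemma gronwall:
  fixes u :: "real \<Rightarrow> real"
  assumes uc: "continuous_on {0..S} u" and C: "0 \<le> C" and L: "0 \<le> L"
    and le: "\<And>t. t \<in> {0..S} \<Longrightarrow> u t \<le> C + L * integral {0..t} u"
    and t: "t \<in> {0..S}"
  shows "u t \<le> C * exp (L * t)"
proof -
  define v where "v t = integral {0..t} u" for t
  define h where "h t = exp (- L * t) * (C + L * v t)" for t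
  define h' where "h' t = exp (- L * t) * (L * (u t - (C + L * v t)))" for t
  have vd: "(v has_vector_derivative u s) (at s within {0..S})" if "s \<in> {0..S}" for s
    unfolding v_def by (rule integral_has_vector_derivative[OF uc that])
  have hd: "(h has_vector_derivative h' s) (at s within {0..t})" if s: "s \<in> {0..t}" for s
  proof -
    have sS: "s \<in> {0..S}" using s t by auto
    have "(v has_real_derivative u s) (at s within {0..S})"
      using vd[OF sS] by (simp add: has_real_derivative_iff_has_vector_derivative)
    then have "(h has_real_derivative (exp (- L * s) * (- L)) * (C + L * v s) + exp (- L * s) * (L * u s)) (at s within {0..S})"
      unfolding h_def by (auto intro!: derivative_eq_intros)
    moreover have "(exp (- L * s) * (- L)) * (C + L * v s) + exp (- L * s) * (L * u s) = h' s"
      unfolding h'_def by (simp add: algebra_simps)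
    ultimately have "(h has_real_derivative h' s) (at s within {0..S})" by simp
    then have "(h has_vector_derivative h' s) (at s within {0..S})"
      by (simp add: has_real_derivative_iff_has_vector_derivative)
    then show ?thesis by (rule has_vector_derivative_within_subset) (use t in auto)
  qed
  have t0: "0 \<le> t" using t by simp
  have I: "(h' has_integral (h t - h 0)) {0..t}"
    by (rule fundamental_theorem_of_calculus[OF t0 hd])
  have "h' s \<le> 0" if "s \<in> {0..t}" for s
  proof -
    have "u s - (C + L * v s) \<le> 0" using le[of s] that t unfolding v_def by auto
    then have "L * (u s - (C + L * v s)) \<le> 0" using L by (simp add: mult_nonneg_nonpos)
    then show ?thesis unfolding h'_def by (simp add: mult_nonneg_nonpos)
  qed
  then have "h t - h 0 \<le> 0"
    using has_integral_le[OF I has_integral_0[of "{0..t}"]] by blast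
  moreover have "h 0 = C" unfolding h_def v_def by simp
  ultimately have "exp (- L * t) * (C + L * v t) \<le> C" unfolding h_def by linarith
  then have "C + L * v t \<le> C * exp (L * t)"
    by (simp add: exp_minus field_simps)
  then show ?thesis using le[OF t] unfolding v_def by simp
qed

lemma norm_ftc_bound:
  fixes e :: "real \<Rightarrow> 'a::euclidean_space"
  assumes t0: "0 \<le> t"
    and ed: "\<And>s. s \<in> {0..t} \<Longrightarrow> (e has_vector_derivative e' s) (at s within {0..t})"
    and e0: "e 0 = 0"
    and gc: "continuous_on {0..t} g"
    and b: "\<And>s. s \<in> {0..t} \<Longrightarrow> norm (e' s) \<le> g s"
  shows "norm (e t) \<le> integral {0..t} g"
proof -
  have I: "(e' has_integral (e t - e 0)) {0..t}" by (rule fundamental_theorem_of_calculus[OF t0 ed])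
  then have "norm (integral {0..t} e') \<le> integral {0..t} g"
    using b integrable_continuous_real[OF gc]
    by (intro Henstock_Kurzweil_Integration.integral_norm_bound_integral) (auto simp: has_integral_integrable)
  then show ?thesis using I e0 by (simp add: integral_unique)
qed


lemma joint_cont:
  fixes f :: "real ^ 'n \<Rightarrow> real \<Rightarrow> real ^ 'n"
  assumes f_cont: "\<And>x. continuous_on {0..T} (f x)"
    and L: "L > 0" "\<forall>x y. \<forall>t\<in>{0..T}. norm (f x t - f y t) \<le> L * norm (x - y)"
    and D: "D \<subseteq> UNIV \<times> {0..T}"
  shows "continuous_on D (\<lambda>p. f (fst p) (snd p))"
  unfolding continuous_on_iff
proof (intro ballI allI impI)
  fix p :: "(real ^ 'n) \<times> real" and e :: real
  assume p: "p \<in> D" and e: "e > 0"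
  obtain y s where ps: "p = (y, s)" by (cases p)
  have s: "s \<in> {0..T}" using p D ps by auto
  obtain d1 where d1: "d1 > 0" "\<forall>s'\<in>{0..T}. dist s' s < d1 \<longrightarrow> dist (f y s') (f y s) < e/2"
    using f_cont[of y] s e unfolding continuous_on_iff by (meson half_gt_zero)
  define d where "d = min d1 (e / (2 * L))"
  have d: "d > 0" using d1 e L by (simp add: d_def)
  have "dist (f (fst q) (snd q)) (f (fst p) (snd p)) < e" if q: "q \<in> D" "dist q p < d" for q
  proof -
    obtain y' s' where qs: "q = (y', s')" by (cases q)
    have s': "s' \<in> {0..T}" using q D qs by auto
    have dy: "dist y' y < d" using dist_fst_le[of q p] q(2) ps qs by simp
    have ds: "dist s' s < d" using dist_snd_le[of q p] q(2) ps qs by simp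
    have "dist (f y' s') (f y s) \<le> dist (f y' s') (f y s') + dist (f y s') (f y s)" by (rule dist_triangle)
    also have "dist (f y' s') (f y s') \<le> L * dist y' y"
      using L(2) s' by (simp add: dist_norm)
    also have "L * dist y' y < e / 2"
    proof -
      have "L * dist y' y < L * (e / (2 * L))" using dy L unfolding d_def by (intro mult_strict_left_mono) auto
      then show ?thesis using L by (simp add: field_simps)
    qed
    also have "dist (f y s') (f y s) < e / 2" using d1(2) s' ds unfolding d_def by auto
    finally show ?thesis using ps qs by simp
  qed
  then show "\<exists>d>0. \<forall>q\<in>D. dist q p < d \<longrightarrow> dist (f (fst q) (snd q)) (f (fst p) (snd p)) < e"
    using d by blast
qed

theorem theorem2p1:
  fixes f :: "real ^ 'n \<Rightarrow> real \<Rightarrow> real ^ 'n"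
    and T :: real and K :: "(real ^ 'n) set" and \<epsilon> :: real
  assumes T_pos: "T > 0"
    and f_cont: "\<And>x. continuous_on {0..T} (f x)"
    and f_lip: "\<exists>L > 0. \<forall>x y. \<forall>t\<in>{0..T}. norm (f x t - f y t) \<le> L * norm (x - y)"
    and K_compact: "compact K"
    and eps_pos: "\<epsilon> > 0"
  shows "\<exists>P0::nat. \<forall>P\<ge>P0. \<exists>W A1 A2 B.
           \<forall>z0\<in>K. \<forall>z x. is_solution f T z0 z \<and> is_solution (neural_rhs P W A1 A2 B) T z0 x
             \<longrightarrow> (\<forall>t\<in>{0..T}. norm (z t - x t) \<le> \<epsilon>)"
proof -
  obtain L where L: "L > 0" "\<forall>x y. \<forall>t\<in>{0..T}. norm (f x t - f y t) \<le> L * norm (x - y)"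
    using f_lip by blast
  have "compact (f 0 ` {0..T})" using compact_continuous_image[OF f_cont[of 0]] by simp
  then obtain Mf0 where Mf0: "\<forall>y\<in>f 0 ` {0..T}. norm y \<le> Mf0" using compact_imp_bounded bounded_iff by metis
  define Mf where "Mf = max Mf0 0"
  have Mf: "\<And>t. t \<in> {0..T} \<Longrightarrow> norm (f 0 t) \<le> Mf" "Mf \<ge> 0" using Mf0 unfolding Mf_def by force+
  obtain RK0 where RK0: "\<forall>y\<in>K. norm y \<le> RK0" using compact_imp_bounded[OF K_compact] bounded_iff by metis
  define RK where "RK = max RK0 0"
  have RK: "\<And>y. y \<in> K \<Longrightarrow> norm y \<le> RK" "RK \<ge> 0" using RK0 unfolding RK_def by force+
  define C0 where "C0 = T * (Mf + L * RK)"
  have C0: "C0 \<ge> 0" using T_pos Mf RK L unfolding C0_def by simp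
  define R where "R = RK + C0 * exp (L * T)"
  have zb: "norm (z t) \<le> R" if z0: "z0 \<in> K" and zs: "is_solution f T z0 z" and t: "t \<in> {0..T}" for z0 z t
  proof -
    have zd: "\<And>s. s \<in> {0..T} \<Longrightarrow> (z has_vector_derivative f (z s) s) (at s within {0..T})"
      and zz: "z 0 = z0" using zs unfolding is_solution_def by auto
    have zc: "continuous_on {0..T} z" by (rule continuous_on_vector_derivative) (rule zd)
    define u where "u s = norm (z s - z0)" for s
    have uc: "continuous_on {0..T} u" unfolding u_def by (intro continuous_intros zc)
    have key: "u t' \<le> C0 + L * integral {0..t'} u" if t': "t' \<in> {0..T}" for t'
    proof -
      have sub: "{0..t'} \<subseteq> {0..T}" using t' by auto
      have uc': "continuous_on {0..t'} u" using uc sub by (rule continuous_on_subset)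
      have b: "norm (f (z s) s) \<le> (Mf + L * RK) + L * u s" if s: "s \<in> {0..t'}" for s
      proof -
        have sT: "s \<in> {0..T}" using s sub by auto
        have "norm (f (z s) s) \<le> norm (f (z s) s - f z0 s) + norm (f z0 s - f 0 s) + norm (f 0 s)"
          using norm_triangle_ineq[of "f (z s) s - f z0 s" "f z0 s - f 0 s"]
            norm_triangle_ineq[of "(f (z s) s - f z0 s) + (f z0 s - f 0 s)" "f 0 s"] by simp
        also have "\<dots> \<le> L * u s + L * RK + Mf"
        proof (intro add_mono)
          show "norm (f (z s) s - f z0 s) \<le> L * u s" using L(2) sT unfolding u_def by blast
          have "norm (f z0 s - f 0 s) \<le> L * norm (z0 - 0)" using L(2) sT by blast
          also have "\<dots> \<le> L * RK" using RK(1)[OF z0] L by simp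
          finally show "norm (f z0 s - f 0 s) \<le> L * RK" .
          show "norm (f 0 s) \<le> Mf" using Mf sT by blast
        qed
        finally show ?thesis by simp
      qed
      have "u t' \<le> integral {0..t'} (\<lambda>s. (Mf + L * RK) + L * u s)"
        unfolding u_def
      proof (rule norm_ftc_bound[where e="\<lambda>s. z s - z0" and e'="\<lambda>s. f (z s) s"])
        show "0 \<le> t'" using t' by simp
        show "((\<lambda>s. z s - z0) has_vector_derivative f (z s) s) (at s within {0..t'})" if "s \<in> {0..t'}" for s
        proof -
          have "(z has_vector_derivative f (z s) s) (at s within {0..t'})"
            using zd[of s] that sub by (auto intro: has_vector_derivative_within_subset)
          then show ?thesis using has_vector_derivative_diff[OF _ has_vector_derivative_const[of z0]] by fastforce
        qed
        show "z 0 - z0 = 0" using zz by simp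
        show "continuous_on {0..t'} (\<lambda>s. Mf + L * RK + L * norm (z s - z0))"
        proof -
          have "continuous_on {0..t'} (\<lambda>s. Mf + L * RK + L * u s)" by (intro continuous_intros uc')
          then show ?thesis by (simp add: u_def)
        qed
        show "\<And>s. s \<in> {0..t'} \<Longrightarrow> norm (f (z s) s) \<le> Mf + L * RK + L * norm (z s - z0)"
          using b unfolding u_def by simp
      qed
      also have "\<dots> = (Mf + L * RK) * t' + L * integral {0..t'} u"
      proof -
        have "integral {0..t'} (\<lambda>s. (Mf + L * RK) + L * u s) = integral {0..t'} (\<lambda>s. Mf + L * RK) + integral {0..t'} (\<lambda>s. L * u s)"
        proof (rule integral_add)
          show "(\<lambda>s. Mf + L * RK) integrable_on {0..t'}" by (rule integrable_continuous_real) (rule continuous_on_const)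
          have "continuous_on {0..t'} (\<lambda>s. L * u s)" by (intro continuous_intros uc')
          then show "(\<lambda>s. L * u s) integrable_on {0..t'}" by (rule integrable_continuous_real)
        qed
        then show ?thesis using t' by simp
      qed
      also have "\<dots> \<le> C0 + L * integral {0..t'} u"
      proof -
        have "0 \<le> Mf + L * RK" using Mf RK L by simp
        then have "(Mf + L * RK) * t' \<le> (Mf + L * RK) * T" using t' by (intro mult_left_mono) auto
        then show ?thesis unfolding C0_def by (simp add: mult.commute)
      qed
      finally show ?thesis .
    qed
    have "u t \<le> C0 * exp (L * t)" by (rule gronwall[OF uc C0 _ key t]) (use L in simp)
    also have "\<dots> \<le> C0 * exp (L * T)" using C0 L t by (simp add: mult_left_mono)
    finally have "u t \<le> C0 * exp (L * T)" .
    moreover have "norm (z t) \<le> norm z0 + u t" unfolding u_def using norm_triangle_ineq[of z0 "z t - z0"] by simp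
    ultimately show ?thesis using RK(1)[OF z0] unfolding R_def by simp
  qed
  define D where "D = cball (0::real^'n) (R+1) \<times> {0..T}"
  have Dc: "compact D" unfolding D_def by (intro compact_Times compact_cball compact_Icc)
  have FcD: "continuous_on D (\<lambda>p. f (fst p) (snd p))"
    by (rule joint_cont[OF f_cont L]) (auto simp: D_def)
  define eta where "eta = min \<epsilon> 1 / (2 * (T + 1)) * exp (- (L * T))"
  have T1: "T + 1 > 0" using T_pos by simp
  have eta_pos: "eta > 0" using eps_pos T1 unfolding eta_def by (intro mult_pos_pos divide_pos_pos) auto
  define bnd where "bnd = T * eta * exp (L * T)"
  have bnd: "bnd \<le> min \<epsilon> 1 / 2"
  proof -
    have e1: "exp (- (L * T)) * exp (L * T) = 1" by (simp flip: exp_add)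
    have "bnd = T * (min \<epsilon> 1 / (2 * (T + 1)))" unfolding bnd_def eta_def
      by (simp only: mult.assoc e1 mult_1_right)
    also have "\<dots> = (T / (T + 1)) * (min \<epsilon> 1 / 2)" using T1 by (simp add: field_simps)
    also have "\<dots> \<le> 1 * (min \<epsilon> 1 / 2)" using T1 eps_pos by (intro mult_right_mono) auto
    finally show ?thesis by simp
  qed
  define etac where "etac = eta / real CARD('n)"
  have etac_pos: "etac > 0" using eta_pos unfolding etac_def by simp
  have ex: "\<forall>j. \<exists>(N::nat) w a b c. \<forall>p\<in>D. \<bar>f (fst p) (snd p) $ j - (\<Sum>i\<in>{1..N}. w i * relu (a i \<bullet> fst p + b i * snd p + c i))\<bar> < etac"
  proof
    fix j
    have "continuous_on D (\<lambda>p. f (fst p) (snd p) $ j)" by (rule continuous_on_component[OF FcD])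
    then obtain g where g: "g \<in> NET" "\<forall>p\<in>D. \<bar>f (fst p) (snd p) $ j - g p\<bar> < etac"
      using cont_approx[OF Dc] etac_pos unfolding napprox_def by blast
    from NET_repr[OF g(1)] obtain N :: nat and w a b c where
      gr: "\<forall>p. g p = (\<Sum>i\<in>{1..N}. w i * relu (a i \<bullet> fst p + b i * snd p + c i))" by blast
    have "\<forall>p\<in>D. \<bar>f (fst p) (snd p) $ j - (\<Sum>i\<in>{1..N}. w i * relu (a i \<bullet> fst p + b i * snd p + c i))\<bar> < etac"
      using g(2) gr by simp
    then show "\<exists>(N::nat) w a b c. \<forall>p\<in>D. \<bar>f (fst p) (snd p) $ j - (\<Sum>i\<in>{1..N}. w i * relu (a i \<bullet> fst p + b i * snd p + c i))\<bar> < etac"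
      by blast
  qed
  then have "\<exists>(Nf :: 'n \<Rightarrow> nat) wf af bf cf. \<forall>j. \<forall>p\<in>D. \<bar>f (fst p) (snd p) $ j - (\<Sum>i\<in>{1..Nf j}. wf j i * relu (af j i \<bullet> fst p + bf j i * snd p + cf j i))\<bar> < etac"
    by (simp only: choice_iff)
  then obtain Nf :: "'n \<Rightarrow> nat" and wf af bf cf where
    nf: "\<And>j. \<forall>p\<in>D. \<bar>f (fst p) (snd p) $ j - (\<Sum>i\<in>{1..Nf j}. wf j i * relu (af j i \<bullet> fst p + bf j i * snd p + cf j i))\<bar> < etac"
    by blast
  define P0 where "P0 = Max (range Nf)"
  have NfP0: "Nf j \<le> P0" for j unfolding P0_def by (rule Max_ge) auto
  show ?thesis
  proof (rule exI[of _ P0], intro allI impI)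
    fix P :: nat assume P: "P0 \<le> P"
    define W where "W i = (\<chi> j. if i \<le> Nf j then wf j i else 0)" for i
    define A1 where "A1 i = (\<chi> j. af j i)" for i
    define A2 where "A2 i = (\<chi> j. bf j i)" for i
    define B where "B i = (\<chi> j. cf j i)" for i
    define G where "G = neural_rhs P W A1 A2 B"
    have Gj: "G y t $ j = (\<Sum>i\<in>{1..Nf j}. wf j i * relu (af j i \<bullet> y + bf j i * t + cf j i))" for y t j
    proof -
      have "G y t $ j = (\<Sum>i\<in>{1..P}. (if i \<in> {..Nf j} then wf j i * relu (af j i \<bullet> y + bf j i * t + cf j i) else 0))"
        unfolding G_def neural_rhs_def sum_component
        by (rule sum.cong) (auto simp: hadamard_def relu_vec_def W_def A1_def A2_def B_def
            matrix_vector_mult_def inner_vec_def mult.commute)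
      also have "\<dots> = (\<Sum>i\<in>{1..P} \<inter> {..Nf j}. wf j i * relu (af j i \<bullet> y + bf j i * t + cf j i))"
        by (rule sum.inter_restrict[symmetric]) simp
      also have "{1..P} \<inter> {..Nf j} = {1..Nf j}" using NfP0[of j] P by auto
      finally show ?thesis .
    qed
    have Gapx: "norm (f y t - G y t) \<le> eta" if yt: "y \<in> cball 0 (R+1)" "t \<in> {0..T}" for y t
    proof -
      have p: "(y, t) \<in> D" using yt by (simp add: D_def)
      have cj: "\<bar>(f y t - G y t) $ j\<bar> \<le> etac" for j
      proof -
        have "\<bar>f (fst (y, t)) (snd (y, t)) $ j - (\<Sum>i\<in>{1..Nf j}. wf j i * relu (af j i \<bullet> fst (y, t) + bf j i * snd (y, t) + cf j i))\<bar> < etac"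
          using nf[of j] p by blast
        then show ?thesis by (simp add: Gj)
      qed
      have "norm (f y t - G y t) \<le> (\<Sum>j\<in>UNIV. \<bar>(f y t - G y t) $ j\<bar>)" by (rule norm_le_l1_cart)
      also have "\<dots> \<le> (\<Sum>j\<in>(UNIV::'n set). etac)" using cj by (intro sum_mono) auto
      also have "\<dots> = eta" unfolding etac_def by simp
      finally show ?thesis .
    qed
    have main: "\<forall>z0\<in>K. \<forall>z x. is_solution f T z0 z \<and> is_solution G T z0 x \<longrightarrow> (\<forall>t\<in>{0..T}. norm (z t - x t) \<le> \<epsilon>)"
    proof (rule ballI, rule allI, rule allI, rule impI)
      fix z0 z x assume z0: "z0 \<in> K" and sols: "is_solution f T z0 z \<and> is_solution G T z0 x"
      have zs: "is_solution f T z0 z" using sols by simp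
      have zd: "\<And>s. s \<in> {0..T} \<Longrightarrow> (z has_vector_derivative f (z s) s) (at s within {0..T})"
        and zz: "z 0 = z0" using sols unfolding is_solution_def by auto
      have xd: "\<And>s. s \<in> {0..T} \<Longrightarrow> (x has_vector_derivative G (x s) s) (at s within {0..T})"
        and xx: "x 0 = z0" using sols unfolding is_solution_def by auto
      have zc: "continuous_on {0..T} z" by (rule continuous_on_vector_derivative) (rule zd)
      have xc: "continuous_on {0..T} x" by (rule continuous_on_vector_derivative) (rule xd)
      define u where "u s = norm (z s - x s)" for s
      have uc: "continuous_on {0..T} u" unfolding u_def by (intro continuous_intros zc xc)
      have claim: "\<forall>s\<in>{0..S}. u s \<le> bnd" if S: "0 \<le> S" "S \<le> T" and S1: "\<forall>s\<in>{0..S}. u s < 1" for S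
      proof
        fix t assume t: "t \<in> {0..S}"
        have subS: "{0..S} \<subseteq> {0..T}" using S by auto
        have ucS: "continuous_on {0..S} u" using uc subS by (rule continuous_on_subset)
        have eb: "norm (f (z s) s - G (x s) s) \<le> L * u s + eta" if s: "s \<in> {0..S}" for s
        proof -
          have sT: "s \<in> {0..T}" using s subS by auto
          have "norm (x s) \<le> norm (z s) + u s"
            using norm_triangle_ineq[of "z s" "x s - z s"] norm_minus_commute[of "z s" "x s"] by (simp add: u_def)
          moreover have "norm (z s) \<le> R" by (rule zb[OF z0 zs sT])
          moreover have "u s < 1" using S1 s by blast
          ultimately have "norm (x s) \<le> R + 1" by linarith
          then have "x s \<in> cball 0 (R+1)" by simp
          then have g1: "norm (f (x s) s - G (x s) s) \<le> eta" using Gapx sT by blast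
          have g2: "norm (f (z s) s - f (x s) s) \<le> L * u s" using L(2) sT unfolding u_def by blast
          show ?thesis
            using norm_triangle_ineq[of "f (z s) s - f (x s) s" "f (x s) s - G (x s) s"] g1 g2 by simp
        qed
        have key: "u t' \<le> T * eta + L * integral {0..t'} u" if t': "t' \<in> {0..S}" for t'
        proof -
          have sub: "{0..t'} \<subseteq> {0..T}" using t' S by auto
          have sub': "{0..t'} \<subseteq> {0..S}" using t' by auto
          have uc': "continuous_on {0..t'} u" using uc sub by (rule continuous_on_subset)
          have "u t' \<le> integral {0..t'} (\<lambda>s. L * u s + eta)"
            unfolding u_def
          proof (rule norm_ftc_bound[where e="\<lambda>s. z s - x s" and e'="\<lambda>s. f (z s) s - G (x s) s"])
            show "0 \<le> t'" using t' by simp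
            show "((\<lambda>s. z s - x s) has_vector_derivative f (z s) s - G (x s) s) (at s within {0..t'})"
              if "s \<in> {0..t'}" for s
            proof -
              have "(z has_vector_derivative f (z s) s) (at s within {0..t'})"
                using zd[of s] that sub by (auto intro: has_vector_derivative_within_subset)
              moreover have "(x has_vector_derivative G (x s) s) (at s within {0..t'})"
                using xd[of s] that sub by (auto intro: has_vector_derivative_within_subset)
              ultimately show ?thesis by (rule has_vector_derivative_diff)
            qed
            show "z 0 - x 0 = 0" using zz xx by simp
            show "continuous_on {0..t'} (\<lambda>s. L * norm (z s - x s) + eta)"
            proof -
              have "continuous_on {0..t'} (\<lambda>s. L * u s + eta)" by (intro continuous_intros uc')
              then show ?thesis by (simp add: u_def)
            qed
            show "\<And>s. s \<in> {0..t'} \<Longrightarrow> norm (f (z s) s - G (x s) s) \<le> L * norm (z s - x s) + eta"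
              using eb sub' unfolding u_def by auto
          qed
          also have "\<dots> = L * integral {0..t'} u + eta * t'"
          proof -
            have "integral {0..t'} (\<lambda>s. L * u s + eta) = integral {0..t'} (\<lambda>s. L * u s) + integral {0..t'} (\<lambda>s. eta)"
            proof (rule integral_add)
              show "(\<lambda>s. eta) integrable_on {0..t'}" by (rule integrable_continuous_real) (rule continuous_on_const)
              have "continuous_on {0..t'} (\<lambda>s. L * u s)" by (intro continuous_intros uc')
              then show "(\<lambda>s. L * u s) integrable_on {0..t'}" by (rule integrable_continuous_real)
            qed
            then show ?thesis using t' by simp
          qed
          also have "\<dots> \<le> T * eta + L * integral {0..t'} u"
          proof -
            have "eta * t' \<le> eta * T" using eta_pos t' S by (intro mult_left_mono) auto
            then show ?thesis by (simp add: mult.commute)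
          qed
          finally show ?thesis .
        qed
        have Ce: "0 \<le> T * eta" using T_pos eta_pos by simp
        have "u t \<le> T * eta * exp (L * t)" by (rule gronwall[OF ucS Ce _ key t]) (use L in simp)
        also have "\<dots> \<le> T * eta * exp (L * T)" using Ce L t S by (intro mult_left_mono) auto
        finally show "u t \<le> bnd" unfolding bnd_def .
      qed
      have bnd1: "bnd < 1" using bnd by simp
      have all1: "\<forall>t\<in>{0..T}. u t < 1"
      proof (rule ccontr)
        assume "\<not> (\<forall>t\<in>{0..T}. u t < 1)"
        then obtain t0 where t0: "t0 \<in> {0..T}" "u t0 \<ge> 1" by (auto simp: not_less)
        define Sset where "Sset = {0..T} \<inter> u -` {1..}"
        have Scl: "closed Sset" unfolding Sset_def
          by (rule continuous_closed_preimage[OF uc closed_atLeastAtMost closed_atLeast])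
        have Sne: "Sset \<noteq> {}" using t0 by (auto simp: Sset_def)
        have Sbdd: "bdd_below Sset" unfolding Sset_def by (rule bdd_belowI[of _ 0]) auto
        define t1 where "t1 = Inf Sset"
        have t1S: "t1 \<in> Sset" unfolding t1_def by (rule closed_contains_Inf[OF Sne Sbdd Scl])
        have low: "u s < 1" if "s \<in> {0..T}" "s < t1" for s
        proof (rule ccontr)
          assume "\<not> u s < 1"
          then have "s \<in> Sset" using that by (auto simp: Sset_def)
          then have "t1 \<le> s" unfolding t1_def using Sbdd by (rule cInf_lower)
          then show False using that by simp
        qed
        have u0: "u 0 = 0" using zz xx by (simp add: u_def)
        have t1T: "0 \<le> t1" "t1 \<le> T" "u t1 \<ge> 1" using t1S by (auto simp: Sset_def)
        have t1pos: "0 < t1" using t1T u0 by (cases "t1 = 0") auto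
        define Q where "Q = {0..t1} \<inter> u -` {..bnd}"
        have Qcl: "closed Q" unfolding Q_def
        proof (rule continuous_closed_preimage[OF _ closed_atLeastAtMost closed_atMost])
          show "continuous_on {0..t1} u" using t1T by (intro continuous_on_subset[OF uc]) auto
        qed
        have "{0..<t1} \<subseteq> Q"
        proof
          fix s assume s: "s \<in> {0..<t1}"
          have "\<forall>r\<in>{0..s}. u r \<le> bnd"
            by (rule claim) (use s t1T low in auto)
          then show "s \<in> Q" using s by (auto simp: Q_def)
        qed
        then have "closure {0..<t1} \<subseteq> Q" using Qcl by (rule closure_minimal)
        then have "t1 \<in> Q" using t1pos by auto
        then show False using t1T bnd1 by (auto simp: Q_def)
      qed
      have "\<forall>s\<in>{0..T}. u s \<le> bnd" by (rule claim) (use T_pos all1 in auto)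
      show "\<forall>t\<in>{0..T}. norm (z t - x t) \<le> \<epsilon>"
      proof
        fix t assume "t \<in> {0..T}"
        then have "u t \<le> bnd" using \<open>\<forall>s\<in>{0..T}. u s \<le> bnd\<close> by blast
        moreover have "min \<epsilon> 1 / 2 \<le> \<epsilon>" using eps_pos by linarith
        ultimately show "norm (z t - x t) \<le> \<epsilon>" using bnd unfolding u_def by linarith
      qed
    qed
    then show "\<exists>W A1 A2 B. \<forall>z0\<in>K. \<forall>z x. is_solution f T z0 z \<and> is_solution (neural_rhs P W A1 A2 B) T z0 x
             \<longrightarrow> (\<forall>t\<in>{0..T}. norm (z t - x t) \<le> \<epsilon>)"
      unfolding G_def by blast
  qed
qed

end
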